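(* Let $Z\in\{0,1\}$ be a treatment variable and $X$ pre-treatment covariates with distribution $\mathcal{Q}$. Let $\mathcal{P}(Z=1\mid X)$ be the true conditional treatment-assignment model and $\mathcal{P}'(Z=1\mid X)$ an approximation of it produced by logistic regression. Let $\delta=\int_X\mathcal{Q}(X)\mathcal{P}(Z=1\mid X)\,dX$ and $\delta'=\int_X\mathcal{Q}(X)\mathcal{P}'(Z=1\mid X)\,dX$, and let $\mathcal{Q}\mathcal{P}$ (resp. $\mathcal{Q}\mathcal{P}'$) denote the distribution of $X$ given $Z=1$ when $X\sim\mathcal{Q}$ and $Z$ is assigned according to $\mathcal{P}$ (resp. $\mathcal{P}'$), i.e. with density $\mathcal{Q}(x)\mathcal{P}(Z=1\mid x)/\delta$ (resp. $\mathcal{Q}(x)\mathcal{P}'(Z=1\mid x)/\delta'$). Let $f$ be any function of $X$ with $0\le f(x)\le M$ for all $x$, for a fixed constant $M$. For $0\le\epsilon,\gamma\le1$, if $\mathbb{E}_{X\sim\mathcal{Q}}\left(|\mathcal{P}(Z=1\mid X)-\mathcal{P}'(Z=1\mid X)|\right)\le\epsilon$ and $\mathbb{E}_{X\sim\mathcal{Q}\mathcal{P}}(f(X))\le\gamma M$, then $$\mathbb{E}_{X\sim\mathcal{Q}\mathcal{P}'}(f(X))\le\left(\frac{\epsilon}{\delta}+\gamma\right)\left(\frac{\delta}{\delta-\epsilon}\right)M.$$ *)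

theory Defs
  imports "HOL-Probability.Probability"
begin

text \<open>Logistic (sigmoid) function; a logistic-regression propensity model is
  x \<mapsto> logistic (b0 + beta \<bullet> x).\<close>
definition logistic :: "real \<Rightarrow> real" where
  "logistic t = 1 / (1 + exp (- t))"

definition treat_share :: "'a measure \<Rightarrow> ('a \<Rightarrow> real) \<Rightarrow> real" where
  "treat_share Q p = (\<integral>x. p x \<partial>Q)"

text \<open>Distribution of X given Z=1, where X ~ Q and Z is assigned by p:
  density Q(x) p(x) / delta with respect to Q.\<close>
definition treated_dist :: "'a measure \<Rightarrow> ('a \<Rightarrow> real) \<Rightarrow> 'a measure" where
  "treated_dist Q p = density Q (\<lambda>x. ennreal (p x / treat_share Q p))"

end

theory Submission
  imports Defs
begin

theorem lemma20:
  fixes Q :: "'a::euclidean_space measure"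
    and p p' f :: "'a \<Rightarrow> real"
    and beta :: 'a and b0 :: real
    and M \<epsilon> \<gamma> :: real
  assumes "prob_space Q"
    and "sets Q = sets borel"
    and "p \<in> borel_measurable Q"
    and "\<And>x. 0 \<le> p x \<and> p x \<le> 1"
    and "\<And>x. p' x = logistic (b0 + beta \<bullet> x)"
    and "f \<in> borel_measurable Q"
    and "\<And>x. 0 \<le> f x \<and> f x \<le> M"
    and "0 \<le> \<epsilon>" and "\<epsilon> \<le> 1" and "0 \<le> \<gamma>" and "\<gamma> \<le> 1"
    and "\<epsilon> < treat_share Q p"
    and "(\<integral>x. \<bar>p x - p' x\<bar> \<partial>Q) \<le> \<epsilon>"
    and "(\<integral>x. f x \<partial>treated_dist Q p) \<le> \<gamma> * M"
  shows "(\<integral>x. f x \<partial>treated_dist Q p')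
           \<le> (\<epsilon> / treat_share Q p + \<gamma>) * (treat_share Q p / (treat_share Q p - \<epsilon>)) * M"
proof -
  interpret prob_space Q by fact
  define d where "d = treat_share Q p"
  define d' where "d' = treat_share Q p'"
  have dpos: "d > 0" using assms(8,12) d_def by linarith
  have p'eq: "p' = (\<lambda>x. 1 / (1 + exp (- (b0 + beta \<bullet> x))))"
    using assms(5) by (auto simp: logistic_def)
  have p'pos: "0 < p' x" "p' x \<le> 1" for x
    unfolding p'eq by (auto simp: add_pos_pos)
  have mp': "p' \<in> borel_measurable Q"
    unfolding p'eq measurable_cong_sets[OF assms(2) refl] by measurable
  have mp: "p \<in> borel_measurable Q" and mf: "f \<in> borel_measurable Q" using assms by auto
  have M0: "0 \<le> M" using assms(7)[of undefined] by linarith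
  have ip: "integrable Q p"
    by (rule integrable_const_bound[where B=1]) (use assms(4) mp in auto)
  have ip': "integrable Q p'"
    by (rule integrable_const_bound[where B=1]) (use p'pos mp' in \<open>auto simp: abs_le_iff less_imp_le\<close>)
  have bd: "\<bar>q x * f x\<bar> \<le> M" if "0 \<le> q x" "q x \<le> 1" for q :: "'a \<Rightarrow> real" and x
  proof -
    have "q x * f x \<le> 1 * M" using that assms(7)[of x] by (intro mult_mono) auto
    moreover have "0 \<le> q x * f x" using that assms(7)[of x] by simp
    ultimately show ?thesis by simp
  qed
  have ipf: "integrable Q (\<lambda>x. p x * f x)"
    by (rule integrable_const_bound[where B=M]) (use assms(4) bd[of p] mp mf in auto)
  have ip'f: "integrable Q (\<lambda>x. p' x * f x)"
    by (rule integrable_const_bound[where B=M]) (use p'pos bd[of p'] mp' mf in \<open>auto simp: less_imp_le\<close>)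
  have idiff: "integrable Q (\<lambda>x. \<bar>p x - p' x\<bar>)" using ip ip' by auto
  have idm: "integrable Q (\<lambda>x. M * \<bar>p x - p' x\<bar>)" using idiff by auto
  have d'ge: "d' \<ge> d - \<epsilon>"
  proof -
    have "d - d' = (\<integral>x. p x - p' x \<partial>Q)" unfolding d_def d'_def treat_share_def
      using ip ip' by simp
    also have "\<dots> \<le> (\<integral>x. \<bar>p x - p' x\<bar> \<partial>Q)"
      by (rule integral_mono) (use ip ip' idiff in auto)
    finally show ?thesis using assms(13) by linarith
  qed
  have d'pos: "d' > 0" using d'ge assms(12) d_def by linarith
  have T1: "(\<integral>x. f x \<partial>treated_dist Q p) = (\<integral>x. p x * f x \<partial>Q) / d"
    unfolding treated_dist_def d_def[symmetric]
    by (subst integral_density) (use mp mf assms(4) dpos in auto)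
  have T2: "(\<integral>x. f x \<partial>treated_dist Q p') = (\<integral>x. p' x * f x \<partial>Q) / d'"
    unfolding treated_dist_def d'_def[symmetric]
    by (subst integral_density) (use mp' mf p'pos d'pos in \<open>auto simp: less_imp_le\<close>)
  have A: "(\<integral>x. p x * f x \<partial>Q) \<le> d * \<gamma> * M"
    using assms(14) T1 dpos by (simp add: divide_le_eq mult.commute mult.left_commute)
  have B: "(\<integral>x. p' x * f x \<partial>Q) \<le> (\<integral>x. p x * f x + M * \<bar>p x - p' x\<bar> \<partial>Q)"
  proof (rule integral_mono)
    show "integrable Q (\<lambda>x. p x * f x + M * \<bar>p x - p' x\<bar>)" using ipf idm by auto
    fix x
    have "p' x * f x - p x * f x \<le> \<bar>p x - p' x\<bar> * f x"
      using assms(7)[of x] by (simp add: left_diff_distrib[symmetric] mult_right_mono)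
    also have "\<dots> \<le> M * \<bar>p x - p' x\<bar>" using assms(7)[of x] by (simp add: mult.commute mult_right_mono)
    finally show "p' x * f x \<le> p x * f x + M * \<bar>p x - p' x\<bar>" by simp
  qed (use ip'f in auto)
  also have "\<dots> = (\<integral>x. p x * f x \<partial>Q) + M * (\<integral>x. \<bar>p x - p' x\<bar> \<partial>Q)"
    using ipf idiff by simp
  also have "\<dots> \<le> d * \<gamma> * M + M * \<epsilon>"
    using A assms(13) M0 by (simp add: add_mono mult_left_mono)
  finally have C: "(\<integral>x. p' x * f x \<partial>Q) \<le> d * \<gamma> * M + M * \<epsilon>" .
  have num0: "0 \<le> d * \<gamma> * M + M * \<epsilon>" using dpos assms M0 by simp
  have "(\<integral>x. f x \<partial>treated_dist Q p') \<le> (d * \<gamma> * M + M * \<epsilon>) / d'"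
    unfolding T2 using C d'pos by (simp add: divide_right_mono)
  also have "\<dots> \<le> (d * \<gamma> * M + M * \<epsilon>) / (d - \<epsilon>)"
    by (rule divide_left_mono) (use num0 d'ge assms(12) d_def d'pos in auto)
  also have "\<dots> = (\<epsilon> / d + \<gamma>) * (d / (d - \<epsilon>)) * M"
    using dpos assms(12) d_def by (simp add: field_simps)
  finally show ?thesis unfolding d_def .
qed

end
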